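(* Let $G$ be an abelian group and let $Z$ be a finite multiset of elements of $G$. Then $$|\Sigma(Z)|\leqslant\binom{|Z|}{\dim(Z)}\binom{|Z|+\dim(Z)}{\dim(Z)}.$$
   Context: $|Z|$ is the size of $Z$ counted with multiplicity. The additive span of $Z$ is $\Sigma(Z)=\{\sum_{z\in Z'}z: Z'\subseteq Z\}$, where $Z'$ ranges over sub-multisets of $Z$ and each element appears with its multiplicity in $Z'$. A (multi)set $S$ is dissociated if any two sub-multisets $S_1,S_2\subseteq S$ with $\sum_{s\in S_1}s=\sum_{s\in S_2}s$ are equal. Equivalently, $\sum_{s}\mu_s s=0$ with $\mu_s\in\{-1,0,1\}$ forces all $\mu_s=0$. A dissociated multiset therefore contains no repeated element. $\dim(Z)$ is the size of the largest dissociated sub-multiset of $Z$. *)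

theory Defs
  imports Main "HOL-Library.Multiset"
begin

definition additive_span :: "'a::comm_monoid_add multiset \<Rightarrow> 'a set" where
  "additive_span Z = {sum_mset Z' | Z'. Z' \<subseteq># Z}"

definition dissociated :: "'a::comm_monoid_add multiset \<Rightarrow> bool" where
  "dissociated S \<longleftrightarrow>
     (\<forall>S1 S2. S1 \<subseteq># S \<longrightarrow> S2 \<subseteq># S \<longrightarrow> sum_mset S1 = sum_mset S2 \<longrightarrow> S1 = S2)"

definition mdim :: "'a::comm_monoid_add multiset \<Rightarrow> nat" where
  "mdim Z = Max {size S | S. S \<subseteq># Z \<and> dissociated S}"

end

theory Submission
  imports Defs
begin

lemma mdim_facts:
  fixes Z :: "'a::comm_monoid_add multiset"
  shows "mdim Z \<le> size Z" and "\<And>S. S \<subseteq># Z \<Longrightarrow> dissociated S \<Longrightarrow> size S \<le> mdim Z"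
proof -
  let ?D = "{size S | S. S \<subseteq># Z \<and> dissociated S}"
  have fin: "finite ?D"
    by (rule finite_subset[of _ "{..size Z}"]) (auto intro: size_mset_mono)
  have "dissociated ({#}::'a multiset)" unfolding dissociated_def by auto
  then have ne: "?D \<noteq> {}" by (auto intro!: exI[of _ "{#}"])
  show "mdim Z \<le> size Z" unfolding mdim_def using fin ne
    by (auto simp: Max_le_iff intro: size_mset_mono)
  show "\<And>S. S \<subseteq># Z \<Longrightarrow> dissociated S \<Longrightarrow> size S \<le> mdim Z"
    unfolding mdim_def using fin by (intro Max_ge) auto
qed

lemma sum_repeat:
  fixes A B :: "'a::comm_monoid_add multiset"
  assumes "sum_mset A = sum_mset B"
  shows "sum_mset (repeat_mset k A) = sum_mset (repeat_mset k B)"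
  using assms by (induction k) auto

lemma diff_sums:
  fixes S1 S2 :: "'a::ab_group_add multiset"
  assumes "sum_mset S1 = sum_mset S2"
  shows "sum_mset (S1 - S2) = sum_mset (S2 - S1)"
proof -
  have a: "S1 = (S1 - S2) + (S1 \<inter># S2)"
    by (simp add: multiset_eq_iff) linarith
  have b: "S2 = (S2 - S1) + (S1 \<inter># S2)"
    by (simp add: multiset_eq_iff) linarith
  have "sum_mset (S1 - S2) + sum_mset (S1 \<inter># S2) = sum_mset (S2 - S1) + sum_mset (S1 \<inter># S2)"
    using assms a b by (metis sum_mset.union)
  then show ?thesis by simp
qed

lemma card_set_le_size: "card (set_mset M) \<le> size M"
  by (induction M) (auto simp: card_insert_if)


lemma reduce:
  fixes Z M :: "'a::ab_group_add multiset"
  assumes sub: "set_mset M \<subseteq> set_mset Z"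
  and big: "card (set_mset M) > mdim Z"
  shows "\<exists>M'. set_mset M' \<subseteq> set_mset Z \<and> sum_mset M' = sum_mset M \<and> size M' \<le> size M
              \<and> card (set_mset M') < card (set_mset M)"
proof -
  define V where "V = set_mset M"
  have finV: "finite V" unfolding V_def by simp
  have cV: "count (mset_set V) v \<le> 1" for v
    using finV by (cases "v \<in> V") (auto simp: count_mset_set)
  have VZ: "mset_set V \<subseteq># Z"
    unfolding subseteq_mset_def
  proof
    fix v show "count (mset_set V) v \<le> count Z v"
    proof (cases "v \<in> V")
      case True
      then have "v \<in># Z" using sub unfolding V_def by auto
      then show ?thesis using True finV by (simp add: count_mset_set Suc_le_eq)
    next
      case False then show ?thesis by (simp add: count_mset_set)
    qed
  qed
  have "\<not> dissociated (mset_set V)"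
    using mdim_facts(2)[OF VZ] big finV unfolding V_def by force
  then obtain S1 S2 where S: "S1 \<subseteq># mset_set V" "S2 \<subseteq># mset_set V" "sum_mset S1 = sum_mset S2" "S1 \<noteq> S2"
    unfolding dissociated_def by blast
  have gen: "\<exists>P N. P \<subseteq># mset_set V \<and> N \<subseteq># mset_set V \<and> sum_mset P = sum_mset N \<and> P \<noteq> {#}
      \<and> size N \<le> size P \<and> (\<forall>v. count P v = 0 \<or> count N v = 0)"
    if "S1 \<subseteq># mset_set V" "S2 \<subseteq># mset_set V" "sum_mset S1 = sum_mset S2" "S1 \<noteq> S2"
       "size (S2 - S1) \<le> size (S1 - S2)" for S1 S2
  proof (intro exI conjI)
    show "S1 - S2 \<subseteq># mset_set V" using that(1) by (meson diff_subset_eq_self subset_mset.order_trans)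
    show "S2 - S1 \<subseteq># mset_set V" using that(2) by (meson diff_subset_eq_self subset_mset.order_trans)
    show "sum_mset (S1 - S2) = sum_mset (S2 - S1)" using diff_sums[OF that(3)] .
    show "size (S2 - S1) \<le> size (S1 - S2)" by fact
    show "\<forall>v. count (S1 - S2) v = 0 \<or> count (S2 - S1) v = 0" by auto
    show "S1 - S2 \<noteq> {#}"
    proof
      assume e: "S1 - S2 = {#}"
      then have "S2 - S1 = {#}" using that(5) by auto
      with e have "S1 \<subseteq># S2" "S2 \<subseteq># S1" by (auto simp: Diff_eq_empty_iff_mset)
      then show False using that(4) by auto
    qed
  qed
  obtain P N where PN: "P \<subseteq># mset_set V" "N \<subseteq># mset_set V" "sum_mset P = sum_mset N" "P \<noteq> {#}"
      "size N \<le> size P" "\<And>v. count P v = 0 \<or> count N v = 0"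
  proof (cases "size (S2 - S1) \<le> size (S1 - S2)")
    case True
    then show ?thesis using gen[OF S] that by blast
  next
    case False
    then show ?thesis using gen[of S2 S1] S that by fastforce
  qed
  have cP: "count P v \<le> 1" for v using PN(1) cV by (meson order_trans mset_subset_eq_count)
  have PV: "set_mset P \<subseteq> V" using PN(1) finV by (metis mset_subset_eqD subsetI finite_set_mset_mset_set)
  have NV: "set_mset N \<subseteq> V" using PN(2) finV by (metis mset_subset_eqD subsetI finite_set_mset_mset_set)
  define k where "k = Min (count M ` set_mset P)"
  have neP: "set_mset P \<noteq> {}" using PN(4) by simp
  obtain v0 where v0: "v0 \<in># P" "count M v0 = k"
  proof -
    have "k \<in> count M ` set_mset P" unfolding k_def using neP by (intro Min_in) auto
    then show ?thesis using that by auto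
  qed
  have kle: "k \<le> count M v" if "v \<in># P" for v
    unfolding k_def using that by (intro Min_le) auto
  have cP1: "count P v0 = 1" using cP[of v0] v0(1) by (simp add: Suc_le_eq order_antisym)
  have cN0: "count N v0 = 0" using PN(6)[of v0] cP1 by auto
  define RP where "RP = repeat_mset k P"
  define RN where "RN = repeat_mset k N"
  have RPM: "RP \<subseteq># M"
    unfolding subseteq_mset_def RP_def
  proof
    fix v
    show "count (repeat_mset k P) v \<le> count M v"
    proof (cases "count P v = 0")
      case True then show ?thesis by simp
    next
      case False
      then have "count P v = 1" using cP[of v] by linarith
      moreover have "v \<in># P" using False by (simp add: not_in_iff)
      ultimately show ?thesis using kle by simp
    qed
  qed
  define M' where "M' = (M - RP) + RN"
  have "sum_mset RP = sum_mset RN" unfolding RP_def RN_def by (rule sum_repeat[OF PN(3)])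
  have "sum_mset M = sum_mset (M - RP) + sum_mset RP"
    using RPM by (metis subset_mset.diff_add sum_mset.union)
  then have sumeq: "sum_mset M' = sum_mset M"
    unfolding M'_def using \<open>sum_mset RP = sum_mset RN\<close> by simp
  have "size M' = size M - k * size P + k * size N"
  proof -
    have "size M' = size (M - RP) + size RN" unfolding M'_def by (simp del: size_union add: size_union[symmetric])
    also have "size (M - RP) = size M - size RP" using RPM by (simp add: size_Diff_submset)
    finally show ?thesis unfolding RP_def RN_def by simp
  qed
  moreover have "k * size N \<le> k * size P" using PN(5) by simp
  moreover have "k * size P \<le> size M" using RPM size_mset_mono unfolding RP_def by fastforce
  ultimately have sizele: "size M' \<le> size M" by linarith
  have setsub: "set_mset M' \<subseteq> V - {v0}"
  proof
    fix v assume "v \<in># M'"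
    then have pos: "count M' v > 0" by simp
    have cM': "count M' v = count M v - k * count P v + k * count N v"
      unfolding M'_def RP_def RN_def by simp
    have "v \<in> V"
    proof (cases "count N v = 0")
      case True
      then have "k * count P v < count M v" using pos cM' by simp
      then have "count M v > 0" by linarith
      then show ?thesis unfolding V_def by (metis count_greater_zero_iff)
    next
      case False then show ?thesis using NV by (simp add: subset_iff not_in_iff)
    qed
    moreover have "v \<noteq> v0"
    proof
      assume "v = v0"
      then have "count M' v = 0" using cM' cP1 cN0 v0(2) by simp
      then show False using pos by simp
    qed
    ultimately show "v \<in> V - {v0}" by simp
  qed
  have "v0 \<in> V" using v0(1) PV by auto
  then have "card (V - {v0}) < card V" using finV by (meson card_Diff1_less)
  then have "card (set_mset M') < card V"
    using setsub finV by (meson card_mono finite_Diff le_less_trans)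
  moreover have "set_mset M' \<subseteq> set_mset Z" using setsub sub unfolding V_def by auto
  ultimately show ?thesis using sumeq sizele unfolding V_def by blast
qed


lemma card_bounded_msets:
  assumes "finite W"
  shows "finite {M. set_mset M \<subseteq> W \<and> size M \<le> n}"
    and "card {M. set_mset M \<subseteq> W \<and> size M \<le> n} \<le> (n + card W) choose card W"
proof -
  have eq: "{M. set_mset M \<subseteq> W \<and> size M \<le> n} = (\<Union>j\<in>{..n}. multisets_of_size W j)"
    unfolding multisets_of_size_def by auto
  show "finite {M. set_mset M \<subseteq> W \<and> size M \<le> n}"
    unfolding eq using assms by auto
  have "card {M. set_mset M \<subseteq> W \<and> size M \<le> n} \<le> (\<Sum>j\<le>n. card (multisets_of_size W j))"
    unfolding eq by (rule card_UN_le) simp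
  also have "\<dots> = (\<Sum>j\<le>n. (card W + j - 1) choose j)"
    using assms by (simp add: card_multisets_of_size)
  also have "\<dots> = (n + card W) choose card W"
  proof (cases "card W")
    case 0
    have "(\<Sum>j\<le>n. (card W + j - 1) choose j) = (\<Sum>j\<le>n. (if j = 0 then 1 else 0))"
      using 0 by (intro sum.cong) auto
    also have "\<dots> = 1" by (simp add: sum.delta)
    finally show ?thesis using 0 by simp
  next
    case (Suc r)
    have "(\<Sum>j\<le>n. (card W + j - 1) choose j) = (\<Sum>j\<le>n. (r + j) choose j)"
      using Suc by simp
    also have "\<dots> = Suc (r + n) choose n" by (rule sum_choose_lower)
    also have "\<dots> = (n + card W) choose n" using Suc by (simp add: add.commute)
    also have "\<dots> = (n + card W) choose card W"
      using binomial_symmetric[of n "n + card W"] by simp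
    finally show ?thesis .
  qed
  finally show "card {M. set_mset M \<subseteq> W \<and> size M \<le> n} \<le> (n + card W) choose card W" .
qed

theorem proposition3p5:
  fixes Z :: "'a::ab_group_add multiset"
  shows "card (additive_span Z) \<le> (size Z choose mdim Z) * ((size Z + mdim Z) choose mdim Z)"
proof -
  define n where "n = size Z"
  define d where "d = mdim Z"
  define U where "U = set_mset Z"
  define k where "k = card U"
  define d' where "d' = min d k"
  have finU: "finite U" unfolding U_def by simp
  have kn: "k \<le> n" unfolding k_def U_def n_def by (rule card_set_le_size)
  have dn: "d \<le> n" unfolding d_def n_def by (rule mdim_facts(1))
  define R where "R = {M. set_mset M \<subseteq> U \<and> card (set_mset M) \<le> d' \<and> size M \<le> n}"
  define Ws where "Ws = {W. W \<subseteq> U \<and> card W = d'}"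
  define B :: "'a set \<Rightarrow> 'a multiset set" where "B W = {M. set_mset M \<subseteq> W \<and> size M \<le> n}" for W
  have span: "additive_span Z \<subseteq> sum_mset ` R"
  proof
    fix x assume "x \<in> additive_span Z"
    then obtain Z' where Z': "Z' \<subseteq># Z" "x = sum_mset Z'" unfolding additive_span_def by auto
    define Q where "Q M \<longleftrightarrow> set_mset M \<subseteq> U \<and> sum_mset M = x \<and> size M \<le> n" for M
    have "Q Z'" unfolding Q_def U_def n_def using Z' by (auto intro: size_mset_mono mset_subset_eqD)
    then obtain M where M: "Q M" and minM: "\<And>M'. Q M' \<Longrightarrow> card (set_mset M) \<le> card (set_mset M')"
      using ex_has_least_nat[of Q Z' "\<lambda>M. card (set_mset M)"] by blast
    have "card (set_mset M) \<le> d"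
    proof (rule ccontr)
      assume "\<not> card (set_mset M) \<le> d"
      then have "card (set_mset M) > mdim Z" unfolding d_def by simp
      moreover have "set_mset M \<subseteq> set_mset Z" using M unfolding Q_def U_def by simp
      ultimately obtain M' where "set_mset M' \<subseteq> set_mset Z" "sum_mset M' = sum_mset M"
        "size M' \<le> size M" "card (set_mset M') < card (set_mset M)"
        using reduce by blast
      then have "Q M'" using M unfolding Q_def U_def by auto
      with minM \<open>card (set_mset M') < card (set_mset M)\<close> show False by fastforce
    qed
    moreover have "card (set_mset M) \<le> k"
      unfolding k_def using M finU unfolding Q_def by (simp add: card_mono)
    ultimately have "M \<in> R" using M unfolding R_def Q_def d'_def by auto
    then show "x \<in> sum_mset ` R" using M unfolding Q_def by auto
  qed
  have RB: "R \<subseteq> (\<Union>W\<in>Ws. B W)"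
  proof
    fix M assume "M \<in> R"
    then have "card (set_mset M) \<le> d'" "d' \<le> card U" "set_mset M \<subseteq> U" "size M \<le> n"
      unfolding R_def d'_def k_def by auto
    then obtain W where "set_mset M \<subseteq> W" "W \<subseteq> U" "card W = d'"
      using exists_subset_between[of "set_mset M" d' U] finU by blast
    then show "M \<in> (\<Union>W\<in>Ws. B W)" unfolding Ws_def B_def using \<open>size M \<le> n\<close> by blast
  qed
  have finWs: "finite Ws" unfolding Ws_def using finU by simp
  have finB: "W \<in> Ws \<Longrightarrow> finite (B W)" for W
    unfolding B_def Ws_def using finU by (intro card_bounded_msets(1)) (auto intro: finite_subset)
  have cardB: "W \<in> Ws \<Longrightarrow> card (B W) \<le> (n + d') choose d'" for W
    unfolding B_def Ws_def using finU card_bounded_msets(2)[of W n] by (auto intro: finite_subset)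
  have finR: "finite R" by (rule finite_subset[OF RB]) (intro finite_UN_I finWs finB)
  have "card (additive_span Z) \<le> card (sum_mset ` R)"
    using span finR by (intro card_mono) auto
  also have "\<dots> \<le> card R" using card_image_le finR by blast
  also have "\<dots> \<le> card (\<Union>W\<in>Ws. B W)" using RB finWs finB by (intro card_mono) auto
  also have "\<dots> \<le> (\<Sum>W\<in>Ws. card (B W))" using finWs by (rule card_UN_le)
  also have "\<dots> \<le> card Ws * ((n + d') choose d')" using cardB
    sum_bounded_above[of Ws "\<lambda>W. card (B W)" "(n + d') choose d'"] by simp
  also have "card Ws = k choose d'" unfolding Ws_def k_def using finU by (rule n_subsets)
  also have "(k choose d') * ((n + d') choose d') \<le> (n choose d) * ((n + d) choose d)"
  proof (rule mult_le_mono)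
    show "k choose d' \<le> n choose d"
    proof (cases "d \<le> k")
      case True then show ?thesis unfolding d'_def using kn by (simp add: binomial_right_mono)
    next
      case False
      then have "d' = k" unfolding d'_def by simp
      then show ?thesis using dn zero_less_binomial[of d n] by (simp add: Suc_leI)
    qed
    have "d' \<le> d" unfolding d'_def by simp
    have "(n + d') choose d' = (n + d') choose n" using binomial_symmetric[of d' "n + d'"] by simp
    also have "\<dots> \<le> (n + d) choose n" using \<open>d' \<le> d\<close> by (simp add: binomial_right_mono)
    also have "\<dots> = (n + d) choose d" using binomial_symmetric[of d "n + d"] by simp
    finally show "(n + d') choose d' \<le> (n + d) choose d" .
  qed
  finally show ?thesis unfolding n_def d_def .
qed

end
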